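(* For a positive integer $n$, let $f(n)$ be the maximum value of $\operatorname{Re}\big(\sum_{\xi\in S}\xi\big)$ and $g(n)$ the maximum value of $\big|\sum_{\xi \in S} \xi\big|$, both over all subsets $S$ of the set of $n$-th roots of unity. Then $g(n) = \sqrt{f(n)^2+1}$ if $4 \mid n$, and $g(n) = f(n)$ otherwise. *)

theory Defs
  imports "HOL-Complex_Analysis.Complex_Analysis"
begin

definition roots_of_unity :: "nat \<Rightarrow> complex set" where
  "roots_of_unity n = {z. z ^ n = 1}"

definition f_max :: "nat \<Rightarrow> real" where
  "f_max n = Max ((\<lambda>S. Re (\<Sum>\<xi>\<in>S. \<xi>)) ` Pow (roots_of_unity n))"

definition g_max :: "nat \<Rightarrow> real" where
  "g_max n = Max ((\<lambda>S. cmod (\<Sum>\<xi>\<in>S. \<xi>)) ` Pow (roots_of_unity n))"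

end

theory Submission
  imports Defs
begin

definition ee :: "nat \<Rightarrow> int \<Rightarrow> complex" where
  "ee n k = cis (2 * pi * of_int k / of_nat n)"

lemma ee_add: "ee n (a + b) = ee n a * ee n b"
  by (simp add: ee_def cis_mult add_divide_distrib distrib_left)

lemma ee_mult_n: assumes "n > 0" shows "ee n (int n * q) = 1"
proof -
  have "2 * pi * of_int (int n * q) / of_nat n = 2 * pi * of_int q"
    using assms by simp
  then show ?thesis unfolding ee_def by simp
qed

lemma ee_mod: assumes "n > 0" shows "ee n k = ee n (k mod int n)"
proof -
  have "k = k mod int n + int n * (k div int n)" by simp
  then have "ee n k = ee n (k mod int n) * ee n (int n * (k div int n))"
    by (metis ee_add)
  then show ?thesis using ee_mult_n[OF assms] by simp
qed

lemma ee_norm[simp]: "cmod (ee n k) = 1"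
  by (simp add: ee_def)

lemma ee_nat: "ee n (int k) = cis (2 * pi * real k / real n)"
  by (simp add: ee_def)

lemma ee_Re: "Re (ee n k * cnj (cis \<phi>)) = cos (2 * pi * of_int k / of_nat n - \<phi>)"
  by (simp add: ee_def cis_cnj cis_mult)

lemma roots_eq: assumes "n > 0"
  shows "roots_of_unity n = (\<lambda>k. ee n (int k)) ` {..<n}"
  using Complex.bij_betw_roots_unity[OF assms] unfolding bij_betw_def roots_of_unity_def ee_nat by simp

lemma roots_inj: assumes "n > 0"
  shows "inj_on (\<lambda>k. ee n (int k)) {..<n}"
  using Complex.bij_betw_roots_unity[OF assms] unfolding bij_betw_def ee_nat by simp

lemma roots_window: assumes "n > 0"
  shows "roots_of_unity n = ee n ` {a..<a + int n}" "inj_on (ee n) {a..<a + int n}"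
proof -
  show "inj_on (ee n) {a..<a + int n}"
  proof (rule inj_onI)
    fix k l assume k: "k \<in> {a..<a + int n}" and l: "l \<in> {a..<a + int n}" and e: "ee n k = ee n l"
    have "ee n (int (nat (k mod int n))) = ee n (int (nat (l mod int n)))"
      using e ee_mod[OF assms] assms by simp
    moreover have "nat (k mod int n) \<in> {..<n}" "nat (l mod int n) \<in> {..<n}" using assms
      by (auto simp: nat_less_iff)
    ultimately have "nat (k mod int n) = nat (l mod int n)"
      using roots_inj[OF assms] unfolding inj_on_def by blast
    then have "k mod int n = l mod int n" using assms by (simp add: eq_nat_nat_iff)
    then have "int n dvd (k - l)" by (simp add: mod_eq_dvd_iff)
    then obtain q where q: "k - l = int n * q" by (auto elim: dvdE)
    have "\<bar>int n * q\<bar> < int n" using k l q by auto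
    then have "q = 0" using assms by (auto simp: abs_mult)
    then show "k = l" using q by simp
  qed
  show "roots_of_unity n = ee n ` {a..<a + int n}"
  proof
    show "roots_of_unity n \<subseteq> ee n ` {a..<a + int n}"
    proof
      fix z assume "z \<in> roots_of_unity n"
      then obtain j where j: "j < n" "z = ee n (int j)" using roots_eq[OF assms] by auto
      define k where "k = a + (int j - a) mod int n"
      have "k \<in> {a..<a + int n}" using assms by (auto simp: k_def)
      moreover have "k mod int n = int j mod int n" unfolding k_def by (simp add: mod_simps)
      then have "ee n k = ee n (int j)" using ee_mod[OF assms] by metis
      ultimately show "z \<in> ee n ` {a..<a + int n}" using j by (metis image_eqI)
    qed
  next
    show "ee n ` {a..<a + int n} \<subseteq> roots_of_unity n"
    proof
      fix z assume "z \<in> ee n ` {a..<a + int n}"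
      then obtain k where z: "z = ee n k" by auto
      have "0 \<le> k mod int n" "k mod int n < int n" using assms by auto
      then have "nat (k mod int n) \<in> {..<n}" by (auto simp: nat_less_iff)
      moreover have "z = ee n (int (nat (k mod int n)))" using z ee_mod[OF assms] assms by simp
      ultimately show "z \<in> roots_of_unity n" unfolding roots_eq[OF assms] by blast
    qed
  qed
qed

definition AA :: "nat \<Rightarrow> nat \<Rightarrow> real" where
  "AA n L = cmod (sum (ee n) {0..<int L})"

lemma sum_shift: "sum (ee n) {a..<a + int L} = ee n a * sum (ee n) {0..<int L}"
proof (induction L)
  case 0 then show ?case by simp
next
  case (Suc L)
  have i1: "{a..<a + int (Suc L)} = insert (a + int L) {a..<a + int L}" by auto
  have i2: "{0..<int (Suc L)} = insert (int L) {0..<int L}" by auto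
  show ?case unfolding i1 i2 using Suc by (simp add: ee_add distrib_left)
qed

lemma AA_shift: "cmod (sum (ee n) {a..<a + int L}) = AA n L"
  unfolding AA_def sum_shift by (simp add: norm_mult)

lemma AA_compl: assumes "n \<ge> 2" "L \<le> n" shows "AA n (n - L) = AA n L"
proof -
  have n0: "n > 0" "n > 1" using assms by auto
  have "sum (ee n) {0..<0 + int n} = \<Sum>(roots_of_unity n)"
    using roots_window[OF n0(1), of 0] by (simp add: sum.reindex)
  also have "\<dots> = 0" using sum_roots_unity[OF n0(2)] by (simp add: roots_of_unity_def)
  finally have z: "sum (ee n) {0..<int n} = 0" by simp
  have "sum (ee n) {0..<int n} = sum (ee n) {0..<int L} + sum (ee n) {int L..<int n}"
  proof -
    have "{0..<int n} = {0..<int L} \<union> {int L..<int n}" using assms by auto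
    then show ?thesis by (simp add: sum.union_disjoint)
  qed
  moreover have "{int L..<int n} = {int L..<int L + int (n - L)}" using assms by auto
  ultimately have "sum (ee n) {int L..<int L + int (n - L)} = - sum (ee n) {0..<int L}"
    using z by (simp add: eq_neg_iff_add_eq_0 add.commute)
  then show ?thesis using AA_shift[of n "int L" "n - L"] unfolding AA_def by simp
qed

lemma cos_window: assumes "-(pi/2) < t" "t \<le> 3*pi/2" shows "cos t > 0 \<longleftrightarrow> t < pi/2"
proof
  assume c: "cos t > 0"
  show "t < pi/2"
  proof (rule ccontr)
    assume "\<not> t < pi/2"
    then have "-(pi/2) \<le> t - pi" "t - pi \<le> pi/2" using assms by auto
    then have "0 \<le> cos (t - pi)" by (rule cos_ge_zero)
    then have "cos t \<le> 0" by (simp add: cos_diff)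
    then show False using c by simp
  qed
next
  assume "t < pi/2" then show "cos t > 0" using assms by (intro cos_gt_zero_pi) auto
qed

lemma halfplane:
  assumes n: "n > 0" and x: "x = real n * \<phi> / (2*pi) - real n / 4"
  shows "{z \<in> roots_of_unity n. Re (z * cnj (cis \<phi>)) > 0} = ee n ` {\<lfloor>x\<rfloor>+1..<\<lceil>x + real n / 2\<rceil>}"
proof -
  define a where "a = \<lfloor>x\<rfloor>+1"
  define b where "b = \<lceil>x + real n / 2\<rceil>"
  have th: "2 * pi * of_int k / of_nat n - \<phi> = 2 * pi * (of_int k - x) / real n - pi/2" for k
    using n unfolding x by (simp add: field_simps)
  have key: "cos (2 * pi * of_int k / of_nat n - \<phi>) > 0 \<longleftrightarrow> k < b" if k: "k \<in> {a..<a + int n}" for k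
  proof -
    have r1: "real_of_int (\<lfloor>x\<rfloor>+1) \<le> real_of_int k" "real_of_int k + 1 \<le> real_of_int (\<lfloor>x\<rfloor>+1 + int n)"
      using k unfolding a_def of_int_le_iff by auto
    have k1: "x < of_int k" using r1 floor_correct[of x] by linarith
    have k2: "of_int k \<le> x + real n" using r1 floor_correct[of x] by linarith
    have p1: "-(pi/2) < 2 * pi * (of_int k - x) / real n - pi/2"
      using k1 n by (simp add: field_simps)
    have p2: "2 * pi * (of_int k - x) / real n - pi/2 \<le> 3*pi/2"
    proof -
      have "2*pi*(of_int k - x) \<le> 2*pi*real n" using k2 by (intro mult_left_mono) auto
      then have "2*pi*(of_int k - x) / real n \<le> 2*pi" using n by (simp add: divide_le_eq)
      then show ?thesis by linarith
    qed
    have "cos (2 * pi * of_int k / of_nat n - \<phi>) > 0 \<longleftrightarrow> 2 * pi * (of_int k - x) / real n - pi/2 < pi/2"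
      unfolding th using cos_window[OF p1 p2] .
    also have "\<dots> \<longleftrightarrow> 2 * pi * (of_int k - x) / real n < pi" by linarith
    also have "\<dots> \<longleftrightarrow> pi * (2 * (of_int k - x)) < pi * real n" using n by (simp add: divide_less_eq mult.assoc)
    also have "\<dots> \<longleftrightarrow> 2 * (of_int k - x) < real n" using mult_less_cancel_left_pos[OF pi_gt_zero] by blast
    also have "\<dots> \<longleftrightarrow> of_int k - x < real n / 2" by (simp add: field_simps)
    also have "\<dots> \<longleftrightarrow> k < b" unfolding b_def less_ceiling_iff by linarith
    finally show ?thesis .
  qed
  have bb: "b \<le> a + int n" unfolding a_def b_def
    by (simp add: ceiling_le_iff) linarith
  have ab: "a \<le> b" unfolding a_def b_def using n
    by (smt (verit) le_of_int_ceiling of_int_floor_le of_nat_0_less_iff zero_less_divide_iff of_int_less_iff floor_less_iff ceiling_le_iff)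
  show ?thesis
    unfolding a_def[symmetric] b_def[symmetric] roots_window(1)[OF n, of a]
  proof safe
    fix k assume k: "k \<in> {a..<a + int n}" and "0 < Re (ee n k * cnj (cis \<phi>))"
    then have "k < b" using key[OF k] ee_Re by simp
    then show "ee n k \<in> ee n ` {a..<b}" using k by auto
  next
    fix k assume k: "k \<in> {a..<b}"
    then show "ee n k \<in> ee n ` {a..<a + int n}" using bb by auto
    have k': "k \<in> {a..<a + int n}" using k bb by auto
    show "0 < Re (ee n k * cnj (cis \<phi>))" using key[OF k'] k ee_Re by simp
  qed
qed

lemma boundary:
  assumes n: "n > 0" and x: "x = real n * \<phi> / (2*pi) - real n / 4"
    and nb: "\<forall>z \<in> roots_of_unity n. Re (z * cnj (cis \<phi>)) \<noteq> 0"
  shows "of_int j \<noteq> x" "of_int j \<noteq> x + real n / 2"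
proof -
  have th: "2 * pi * of_int k / of_nat n - \<phi> = 2 * pi * (of_int k - x) / real n - pi/2" for k
    using n unfolding x by (simp add: field_simps)
  have "ee n j \<in> roots_of_unity n" using roots_window(1)[OF n, of j] n by auto
  then have ne: "cos (2 * pi * (of_int j - x) / real n - pi/2) \<noteq> 0" using nb ee_Re th by metis
  show "of_int j \<noteq> x" using ne by auto
  show "of_int j \<noteq> x + real n / 2" using ne n by auto
qed

lemma cmod_add_sq: "(cmod (s + w))^2 = (cmod s)^2 + 2 * Re (w * cnj s) + (cmod w)^2"
  unfolding cmod_power2 by (simp add: power2_eq_square algebra_simps)

lemma cmod_diff_sq: "(cmod (s - w))^2 = (cmod s)^2 - 2 * Re (w * cnj s) + (cmod w)^2"
  unfolding cmod_power2 by (simp add: power2_eq_square algebra_simps)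

lemma arc_sum:
  assumes n: "n > 0" and x: "x = real n * \<phi> / (2*pi) - real n / 4"
  shows "\<Sum>{z \<in> roots_of_unity n. Re (z * cnj (cis \<phi>)) > 0}
     = sum (ee n) {\<lfloor>x\<rfloor>+1..<\<lceil>x + real n / 2\<rceil>}"
    "\<lfloor>x\<rfloor>+1 \<le> \<lceil>x + real n / 2\<rceil>"
    "\<lceil>x + real n / 2\<rceil> \<le> \<lfloor>x\<rfloor>+1 + int n"
proof -
  define a where "a = \<lfloor>x\<rfloor>+1"
  define b where "b = \<lceil>x + real n / 2\<rceil>"
  show bb: "\<lceil>x + real n / 2\<rceil> \<le> \<lfloor>x\<rfloor>+1 + int n"
    by (simp add: ceiling_le_iff) linarith
  show "\<lfloor>x\<rfloor>+1 \<le> \<lceil>x + real n / 2\<rceil>"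
  proof -
    have "real_of_int \<lfloor>x\<rfloor> < x + real n / 2" using n floor_correct[of x] by (smt (verit) of_nat_0_less_iff divide_pos_pos)
    then show ?thesis by (simp add: le_ceiling_iff)
  qed
  have "inj_on (ee n) {a..<b}"
    using roots_window(2)[OF n, of a] bb unfolding a_def b_def by (auto intro: inj_on_subset)
  then show "\<Sum>{z \<in> roots_of_unity n. Re (z * cnj (cis \<phi>)) > 0} = sum (ee n) {\<lfloor>x\<rfloor>+1..<\<lceil>x + real n / 2\<rceil>}"
    unfolding halfplane[OF n x] a_def b_def by (simp add: sum.reindex)
qed

theorem lemma3p10:
  fixes n :: nat
  assumes "n > 0"
  shows "g_max n = (if 4 dvd n then sqrt ((f_max n)\<^sup>2 + 1) else f_max n)"
proof -
  have n: "n > 0" by fact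
  define R where "R = roots_of_unity n"
  have finR: "finite R" unfolding R_def roots_window(1)[OF n, of 0] by simp
  have normR: "cmod z = 1" if "z \<in> R" for z
    using that unfolding R_def roots_window(1)[OF n, of 0] by auto
  have oneR: "1 \<in> R" unfolding R_def roots_of_unity_def by simp
  define P where "P = {z \<in> R. Re (z * cnj (cis 0)) > 0}"
  have P_alt: "P = {z \<in> R. Re z > 0}" by (simp add: P_def)
  have PR: "P \<subseteq> R" unfolding P_alt by auto
  have finP: "finite P" using finR PR by (rule finite_subset[rotated])
  define x0 where "x0 = real n * 0 / (2*pi) - real n / 4"
  define a0 where "a0 = \<lfloor>x0\<rfloor>+1"
  define b0 where "b0 = \<lceil>x0 + real n / 2\<rceil>"
  have sumP: "\<Sum>P = sum (ee n) {a0..<b0}" "a0 \<le> b0"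
    using arc_sum[OF n x0_def] unfolding P_def R_def a0_def b0_def by auto
  have fle: "Re (\<Sum>S) \<le> Re (\<Sum>P)" if S: "S \<subseteq> R" for S
  proof -
    have finS: "finite S" using finR S by (rule finite_subset[rotated])
    have "Re (\<Sum>S) = (\<Sum>z\<in>S \<inter> P. Re z) + (\<Sum>z\<in>S - P. Re z)"
      by (simp add: sum.Int_Diff[OF finS, of _ P])
    also have "(\<Sum>z\<in>S - P. Re z) \<le> 0" using S by (intro sum_nonpos) (auto simp: P_alt)
    also have "(\<Sum>z\<in>S \<inter> P. Re z) \<le> (\<Sum>z\<in>P. Re z)"
      by (intro sum_mono2 finP) (auto simp: P_alt)
    finally show ?thesis by simp
  qed
  have hf: "f_max n = Re (\<Sum>P)"
    unfolding f_max_def R_def[symmetric]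
  proof (rule Max_eqI)
    show "finite ((\<lambda>S. Re (\<Sum>\<xi>\<in>S. \<xi>)) ` Pow R)" using finR by simp
    show "\<And>y. y \<in> (\<lambda>S. Re (\<Sum>\<xi>\<in>S. \<xi>)) ` Pow R \<Longrightarrow> y \<le> Re (\<Sum>P)" using fle by auto
    show "Re (\<Sum>P) \<in> (\<lambda>S. Re (\<Sum>\<xi>\<in>S. \<xi>)) ` Pow R" using PR by auto
  qed
  have cnjP: "cnj ` P = P"
  proof safe
    fix z assume "z \<in> P"
    then have "cnj z \<in> R" "Re (cnj z) > 0" unfolding P_alt R_def roots_of_unity_def
      by (auto simp flip: complex_cnj_power)
    then show "cnj z \<in> P" unfolding P_alt by auto
    then show "z \<in> cnj ` P" by (metis complex_cnj_cnj image_eqI)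
  qed
  have "\<Sum>P = \<Sum>(cnj ` P)" using cnjP by simp
  also have "\<dots> = sum cnj P" by (simp add: sum.reindex inj_on_def)
  also have "\<dots> = cnj (\<Sum>P)" by simp
  finally have "Im (\<Sum>P) = 0" by (metis complex_cnj_cancel_iff complex_cnj_zero_iff cnj.sel(2) Reals_cnj_iff complex_is_Real_iff)
  then have sP: "\<Sum>P = complex_of_real (f_max n)" unfolding hf by (simp add: complex_eq_iff)
  have f0: "f_max n \<ge> 0" unfolding hf by (auto intro!: sum_nonneg simp: P_alt)
  have fA: "f_max n = cmod (sum (ee n) {a0..<b0})" using sP sumP f0 by simp
  have fing: "finite ((\<lambda>S. cmod (\<Sum>\<xi>\<in>S. \<xi>)) ` Pow R)" using finR by simp
  have "g_max n \<in> (\<lambda>S. cmod (\<Sum>\<xi>\<in>S. \<xi>)) ` Pow R"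
    unfolding g_max_def R_def[symmetric] using fing by (intro Max_in) auto
  then obtain S0 where S0R: "S0 \<subseteq> R" and gS0: "g_max n = cmod (\<Sum>S0)" by auto
  have gmax: "cmod (\<Sum>S) \<le> g_max n" if "S \<subseteq> R" for S
    unfolding g_max_def R_def[symmetric] using fing that by (intro Max_ge) auto
  define s where "s = \<Sum>S0"
  have finS0: "finite S0" using finR S0R by (rule finite_subset[rotated])
  have g1: "g_max n \<ge> 1" using gmax[of "{1}"] oneR by simp
  have in1: "Re (z * cnj s) \<ge> 1/2" if z: "z \<in> S0" for z
  proof -
    have "\<Sum>(S0 - {z}) = s - z" unfolding s_def using finS0 z by (simp add: sum_diff1)
    then have "cmod (s - z) \<le> cmod s" using gmax[of "S0 - {z}"] S0R gS0 s_def by auto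
    then have "(cmod (s - z))^2 \<le> (cmod s)^2" by (intro power_mono) auto
    then show ?thesis unfolding cmod_diff_sq using normR[of z] z S0R by auto
  qed
  have out1: "Re (z * cnj s) \<le> -1/2" if z: "z \<in> R" "z \<notin> S0" for z
  proof -
    have "\<Sum>(insert z S0) = s + z" unfolding s_def using finS0 z by simp
    then have "cmod (s + z) \<le> cmod s" using gmax[of "insert z S0"] S0R z gS0 s_def by auto
    then have "(cmod (s + z))^2 \<le> (cmod s)^2" by (intro power_mono) auto
    then show ?thesis unfolding cmod_add_sq using normR[of z] z by auto
  qed
  define \<phi> where "\<phi> = Arg s"
  have cs: "cnj s = complex_of_real (cmod s) * cnj (cis \<phi>)"
    using rcis_cmod_Arg[of s] unfolding rcis_def \<phi>_def by (metis complex_cnj_mult complex_cnj_complex_of_real)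
  have ReS: "Re (z * cnj s) = cmod s * Re (z * cnj (cis \<phi>))" for z
    unfolding cs by (simp add: algebra_simps)
  have spos: "cmod s > 0" using g1 gS0 unfolding s_def by linarith
  have S0eq: "S0 = {z \<in> R. Re (z * cnj (cis \<phi>)) > 0}"
  proof safe
    fix z assume "z \<in> S0"
    then have "Re (z * cnj s) > 0" using in1[of z] by linarith
    then have "cmod s * Re (z * cnj (cis \<phi>)) > 0" using ReS[of z] by simp
    then show "Re (z * cnj (cis \<phi>)) > 0" using spos by (simp add: zero_less_mult_iff)
    show "z \<in> R" using S0R \<open>z \<in> S0\<close> by auto
  next
    fix z assume "z \<in> R" "Re (z * cnj (cis \<phi>)) > 0"
    then have "cmod s * Re (z * cnj (cis \<phi>)) > 0" using spos by simp
    then have "Re (z * cnj s) > 0" using ReS[of z] by simp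
    then show "z \<in> S0" using out1[of z] \<open>z \<in> R\<close> by fastforce
  qed
  have nb: "\<forall>z \<in> roots_of_unity n. Re (z * cnj (cis \<phi>)) \<noteq> 0"
  proof
    fix z assume "z \<in> roots_of_unity n"
    then have "z \<in> R" unfolding R_def .
    have "Re (z * cnj s) \<noteq> 0" using in1[of z] out1[of z] \<open>z \<in> R\<close> by fastforce
    then show "Re (z * cnj (cis \<phi>)) \<noteq> 0" using ReS[of z] by auto
  qed
  define x where "x = real n * \<phi> / (2*pi) - real n / 4"
  define a where "a = \<lfloor>x\<rfloor>+1"
  define b where "b = \<lceil>x + real n / 2\<rceil>"
  have sumS: "s = sum (ee n) {a..<b}" "a \<le> b"
    using arc_sum[OF n x_def] S0eq unfolding s_def R_def a_def b_def by auto
  have gA: "g_max n = cmod (sum (ee n) {a..<b})" using gS0 s_def sumS by simp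
  have bx1: "of_int \<lfloor>x\<rfloor> \<noteq> x" "of_int \<lceil>x + real n / 2\<rceil> \<noteq> x + real n / 2"
    using boundary[OF n x_def nb] by auto
  have fl: "of_int \<lfloor>x\<rfloor> < x" "x < of_int \<lfloor>x\<rfloor> + 1"
    using bx1(1) of_int_floor_le[of x] floor_correct[of x] by (simp_all only: less_le of_int_add of_int_1) auto
  have cl: "x + real n / 2 < of_int \<lceil>x + real n / 2\<rceil>" "of_int \<lceil>x + real n / 2\<rceil> < x + real n / 2 + 1"
  proof -
    have "x + real n / 2 \<le> of_int \<lceil>x + real n / 2\<rceil>" by (rule le_of_int_ceiling)
    then show "x + real n / 2 < of_int \<lceil>x + real n / 2\<rceil>" using bx1(2) by (simp only: less_le) auto
    show "of_int \<lceil>x + real n / 2\<rceil> < x + real n / 2 + 1" using ceiling_correct[of "x + real n / 2"] by linarith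
  qed
  have Lr: "real n - 2 < 2 * real_of_int (b - a)" "2 * real_of_int (b - a) < real n + 2"
  proof -
    have e: "real_of_int (b - a) = real_of_int \<lceil>x + real n / 2\<rceil> - real_of_int \<lfloor>x\<rfloor> - 1"
      unfolding a_def b_def by simp
    have g1: "N - 2 < 2 * (C - F - 1)" if "F < X" "X + N / 2 < C" for N C F X :: real using that by (simp add: field_simps)
    have g2: "2 * (C - F - 1) < N + 2" if "X < F + 1" "C < X + N / 2 + 1" for N C F X :: real using that by (simp add: field_simps)
    show "real n - 2 < 2 * real_of_int (b - a)" unfolding e using g1[OF fl(1) cl(1)] .
    show "2 * real_of_int (b - a) < real n + 2" unfolding e using g2[OF fl(2) cl(2)] .
  qed
  have Li: "int n - 2 < 2 * (b - a)" "2 * (b - a) < int n + 2"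
  proof -
    have "real_of_int (int n - 2) < real_of_int (2 * (b - a))" using Lr by simp
    then show "int n - 2 < 2 * (b - a)" by (simp only: of_int_less_iff)
    have "real_of_int (2 * (b - a)) < real_of_int (int n + 2)" using Lr by simp
    then show "2 * (b - a) < int n + 2" by (simp only: of_int_less_iff)
  qed
  have gL: "g_max n = AA n (nat (b - a))"
    using gA AA_shift[of n a "nat (b - a)"] sumS(2) by simp
  have fL: "f_max n = AA n (nat (b0 - a0))"
    using fA AA_shift[of n a0 "nat (b0 - a0)"] sumP(2) by simp
  define m where "m = n div 4"
  define r where "r = n mod 4"
  have nmr: "n = 4 * m + r" "r < 4" unfolding m_def r_def by auto
  have rn: "real n = 4 * real m + real r" using nmr by simp
  have x0e: "x0 = - (real m + real r / 4)" unfolding x0_def rn by (simp add: field_simps)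
  have x0e2: "x0 + real n / 2 = real m + real r / 4" unfolding x0_def rn by (simp add: field_simps)
  show ?thesis
  proof (cases "r = 0")
    case True
    then have dvd: "4 dvd n" using nmr by simp
    have m1: "m \<ge> 1" using n nmr True by (cases m) auto
    have "\<lfloor>x0\<rfloor> = - int m" by (rule floor_unique) (simp_all add: x0e True)
    then have a0e: "a0 = - int m + 1" unfolding a0_def by simp
    have b0e: "b0 = int m" unfolding b0_def by (rule ceiling_unique) (simp_all add: x0e2 True)
    have "int n = 4 * int m" using nmr True by simp
    then have L: "b - a = 2 * int m" using Li by presburger
    have "{a0..<a0 + int (2*m)} = insert b0 {a0..<b0}" unfolding a0e b0e using m1 by auto
    then have "sum (ee n) {a0..<a0 + int (2*m)} = ee n b0 + sum (ee n) {a0..<b0}"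
      by simp
    also have "ee n b0 = \<i>"
    proof -
      have "2 * pi * of_int b0 / of_nat n = pi / 2" unfolding b0e nmr True using m1 by simp
      then show ?thesis unfolding ee_def by (metis cis_pi_half)
    qed
    finally have "g_max n = cmod (\<i> + complex_of_real (f_max n))"
      using gL AA_shift[of n a0 "2*m"] L sumP sP by (simp add: nat_mult_distrib)
    also have "\<dots> = sqrt ((f_max n)\<^sup>2 + 1)" by (simp add: norm_complex_def)
    finally show ?thesis using dvd by simp
  next
    case False
    then have ndvd: "\<not> 4 dvd n" using nmr by presburger
    have r14: "1 \<le> real r" "real r < 4" using False nmr(2) by auto
    have "\<lfloor>x0\<rfloor> = - int m - 1" by (rule floor_unique) (use r14 in \<open>simp_all add: x0e\<close>)
    then have a0e: "a0 = - int m" unfolding a0_def by simp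
    have b0e: "b0 = int m + 1" unfolding b0_def by (rule ceiling_unique) (use r14 in \<open>simp_all add: x0e2\<close>)
    have L0: "b0 - a0 = 2 * int m + 1" unfolding a0e b0e by simp
    have "int n = 4 * int m + int r" "int r < 4" "int r \<noteq> 0" using nmr False by auto
    then have L: "b - a = 2 * int m + 1 \<or> b - a = int n - (2 * int m + 1)" using Li by presburger
    then show ?thesis
    proof
      assume "b - a = 2 * int m + 1"
      then show ?thesis using gL fL L0 ndvd by simp
    next
      assume L2: "b - a = int n - (2 * int m + 1)"
      show ?thesis
      proof (cases "n = 1")
        case True
        then have "b - a = 0" using L2 nmr by simp
        then have "g_max n = 0" using gL by (simp add: AA_def)
        then show ?thesis using g1 by simp
      next
        case False
        then have n2: "n \<ge> 2" using n by simp
        have le: "2 * m + 1 \<le> n" using nmr False \<open>r \<noteq> 0\<close> by linarith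
        have "nat (b - a) = n - (2 * m + 1)" using L2 le by simp
        then have "g_max n = AA n (2 * m + 1)" using gL AA_compl[OF n2 le] by simp
        then show ?thesis using fL L0 ndvd by (simp add: nat_add_distrib nat_mult_distrib)
      qed
    qed
  qed
qed

end
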